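(* Let $\mu,\nu$ be Radon measures on $\mathbb{R}$ and $I\subset\mathbb{R}$ an interval. Then $\alpha_{s,\mu,\nu}(I)\le 2$, and, whenever $\nu(I)>0$ and $\int\varphi\,d\nu_I>0$, $$\alpha_{s,\mu,\nu}(I)\le\frac{2\alpha_{\mu,\nu}(I)}{\int\varphi\,d\nu_I}.$$ Moreover, if $\nu$ is globally doubling with constant $D$ ($\nu(B(x,2r))\le D\nu(B(x,r))$ for all $x,r$), and $I\subset J\subset\mathbb{R}$ are intervals with $|I|\ge\theta|J|$ for some $\theta>0$, then $\alpha_{s,\mu,\nu}(I)\le C\,\alpha_{s,\mu,\nu}(J)$ for a constant $C$ depending only on $D$ and $\theta$.
   Context: Wasserstein distance: $\mathbb{W}_1(\nu_1,\nu_2) := \sup_\psi |\int\psi\,d\nu_1 - \int\psi\,d\nu_2|$ over all $1$-Lipschitz $\psi\colon\mathbb{R}\to\mathbb{R}$ supported on $[0,1]$. For an interval $I$, $T_I$ is the increasing affine map taking $\overline I$ onto $[0,1]$; $\mu_I := T_{I\sharp}(\mu|_I)/\mu(I)$, $\nu_I := T_{I\sharp}(\nu|_I)/\nu(I)$ (zero if the mass vanishes), $\alpha_{\mu,\nu}(I) := \mathbb{W}_1(\mu_I,\nu_I)$. Let $\varphi(x) := \operatorname{dist}(x,\mathbb{R}\setminus(0,1))$, $\varphi_I := \varphi\circ T_I$. Smooth $\alpha$-numbers: $\alpha_{s,\mu,\nu}(I) := \mathbb{W}_1(\mu_{\varphi,I},\nu_{\varphi,I})$, where $\mu_{\varphi,I}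 := T_{I\sharp}(\mu|_I)/\int\varphi_I\,d\mu$ and $\nu_{\varphi,I} := T_{I\sharp}(\nu|_I)/\int\varphi_I\,d\nu$, with $\mu_{\varphi,I}:\equiv0$ if $\int\varphi_I\,d\mu=0$ (similarly for $\nu$). *)

theory Defs
  imports "HOL-Analysis.Analysis"
begin

text \<open>Radon measure on the real line: a Borel measure that is finite on compact sets
  (on the real line, local finiteness already implies regularity).\<close>
definition radon :: "real measure \<Rightarrow> bool" where
  "radon M \<longleftrightarrow> sets M = sets borel \<and> (\<forall>K. compact K \<longrightarrow> emeasure M K < \<infinity>)"

text \<open>Bounded interval of positive length (needed for T_I to be defined).\<close>
definition real_interval :: "real set \<Rightarrow> bool" where
  "real_interval I \<longleftrightarrow> is_interval I \<and> bounded I \<and> Inf I < Sup I"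

definition ilen :: "real set \<Rightarrow> real" where
  "ilen I = Sup I - Inf I"

definition T_int :: "real set \<Rightarrow> real \<Rightarrow> real" where
  "T_int I x = (x - Inf I) / (Sup I - Inf I)"

definition phi :: "real \<Rightarrow> real" where
  "phi x = infdist x (- {0<..<1})"

definition phi_I :: "real set \<Rightarrow> real \<Rightarrow> real" where
  "phi_I I = phi \<circ> T_int I"

definition W1 :: "real measure \<Rightarrow> real measure \<Rightarrow> real" where
  "W1 m1 m2 = (SUP \<psi> \<in> {\<psi> :: real \<Rightarrow> real. 1-lipschitz_on UNIV \<psi> \<and> closure {x. \<psi> x \<noteq> 0} \<subseteq> {0..1}}.
       \<bar>integral\<^sup>L m1 \<psi> - integral\<^sup>L m2 \<psi>\<bar>)"

definition push_I :: "real measure \<Rightarrow> real set \<Rightarrow> real measure" where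
  "push_I M I = distr (restrict_space M I) borel (T_int I)"

definition norm_I :: "real measure \<Rightarrow> real set \<Rightarrow> real measure" where
  "norm_I M I = (if emeasure M I = 0 then null_measure borel
                 else scale_measure (1 / emeasure M I) (push_I M I))"

definition norm_phi_I :: "real measure \<Rightarrow> real set \<Rightarrow> real measure" where
  "norm_phi_I M I = (let c = integral\<^sup>L M (phi_I I) in
     if c = 0 then null_measure borel else scale_measure (ennreal (1 / c)) (push_I M I))"

definition alpha :: "real measure \<Rightarrow> real measure \<Rightarrow> real set \<Rightarrow> real" where
  "alpha \<mu> \<nu> I = W1 (norm_I \<mu> I) (norm_I \<nu> I)"

definition alpha_s :: "real measure \<Rightarrow> real measure \<Rightarrow> real set \<Rightarrow> real" where
  "alpha_s \<mu> \<nu> I = W1 (norm_phi_I \<mu> I) (norm_phi_I \<nu> I)"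

definition doubling :: "real \<Rightarrow> real measure \<Rightarrow> bool" where
  "doubling D \<nu> \<longleftrightarrow> (\<forall>x r. r > 0 \<longrightarrow> emeasure \<nu> (ball x (2 * r)) \<le> ennreal D * emeasure \<nu> (ball x r))"

end

theory Submission
  imports Defs
begin


definition TS :: "(real \<Rightarrow> real) set" where
 "TS = {\<psi> :: real \<Rightarrow> real. 1-lipschitz_on UNIV \<psi> \<and> closure {x. \<psi> x \<noteq> 0} \<subseteq> {0..1}}"

lemma W1_TS: "W1 m1 m2 = (SUP \<psi> \<in> TS. \<bar>integral\<^sup>L m1 \<psi> - integral\<^sup>L m2 \<psi>\<bar>)"
  unfolding W1_def TS_def by simp

lemma TS_lip: "\<psi> \<in> TS \<Longrightarrow> \<bar>\<psi> x - \<psi> y\<bar> \<le> \<bar>x - y\<bar>"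
  unfolding TS_def using lipschitz_onD[of 1 UNIV \<psi> x y] by (auto simp: dist_real_def)

lemma TS_out: assumes "\<psi> \<in> TS" "x < 0 \<or> x > 1" shows "\<psi> x = 0"
proof (rule ccontr)
  assume "\<psi> x \<noteq> 0"
  then have "x \<in> {x. \<psi> x \<noteq> 0}" by simp
  then have "x \<in> closure {x. \<psi> x \<noteq> 0}" by (rule closure_subset[THEN subsetD])
  moreover have "closure {x. \<psi> x \<noteq> 0} \<subseteq> {0..1}" using assms(1) unfolding TS_def by simp
  ultimately have "x \<in> {0..1}" by blast
  then show False using assms(2) by simp
qed

lemma TS_end: assumes "\<psi> \<in> TS" "y \<in> {0, 1}" shows "\<psi> y = 0"
proof -
  have "\<bar>\<psi> y\<bar> \<le> 0 + e" if e: "e > 0" for e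
  proof -
    define z where "z = (if y = 0 then - e else 1 + e)"
    have z1: "z < 0 \<or> z > 1" using e assms(2) unfolding z_def by auto
    have z2: "\<bar>y - z\<bar> = e" using e assms(2) unfolding z_def by auto
    have "\<psi> z = 0" by (rule TS_out[OF assms(1) z1])
    then show ?thesis using TS_lip[OF assms(1), of y z] z2 by simp
  qed
  then have "\<bar>\<psi> y\<bar> \<le> 0" by (rule field_le_epsilon)
  then show ?thesis by simp
qed

lemma TS_zero: assumes "\<psi> \<in> TS" "x \<notin> {0<..<1}" shows "\<psi> x = 0"
proof (cases "x < 0 \<or> x > 1")
  case True then show ?thesis by (rule TS_out[OF assms(1)])
next
  case False
  then have "x \<in> {0, 1}" using assms(2) by auto
  then show ?thesis by (rule TS_end[OF assms(1)])
qed

lemma phi_ge: assumes "\<And>y. y \<notin> {0<..<1} \<Longrightarrow> d \<le> dist x y" shows "d \<le> phi x"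
proof -
  have "(2::real) \<in> - {0<..<1}" by simp
  then have ne: "- {0<..<1::real} \<noteq> {}" by blast
  show ?thesis unfolding phi_def infdist_notempty[OF ne]
    by (rule cINF_greatest) (use ne assms in auto)
qed

lemma phi_zero: "x \<notin> {0<..<1} \<Longrightarrow> phi x = 0"
  unfolding phi_def by simp

lemma phi_nonneg: "0 \<le> phi x" unfolding phi_def by (rule infdist_nonneg)

lemma phi_le0: "phi x \<le> \<bar>x\<bar>" unfolding phi_def using infdist_le[of 0 "- {0<..<1}" x] by (simp add: dist_real_def)
lemma phi_le1: "phi x \<le> \<bar>x - 1\<bar>" unfolding phi_def using infdist_le[of 1 "- {0<..<1}" x] by (simp add: dist_real_def)

lemma phi_le_half: "phi x \<le> 1/2"
  using phi_le0[of x] phi_le1[of x] phi_zero[of x] by (cases "x \<in> {0<..<1}") auto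

lemma phi_quarter: "x \<in> {1/4..3/4} \<Longrightarrow> 1/4 \<le> phi x"
  by (rule phi_ge) (auto simp: dist_real_def)

lemma TS_le_phi: assumes "\<psi> \<in> TS" shows "\<bar>\<psi> x\<bar> \<le> phi x"
proof (cases "x \<in> {0<..<1}")
  case False then show ?thesis using TS_zero[OF assms False] phi_nonneg by simp
next
  case True
  show ?thesis
  proof (rule phi_ge)
    fix y :: real assume "y \<notin> {0<..<1}"
    then show "\<bar>\<psi> x\<bar> \<le> dist x y" using TS_zero[OF assms, of y] TS_lip[OF assms, of x y]
      by (simp add: dist_real_def)
  qed
qed

lemma TS_bound: "\<psi> \<in> TS \<Longrightarrow> \<bar>\<psi> x\<bar> \<le> 1/2"
  using TS_le_phi phi_le_half order_trans by blast

lemma phi_TS: "phi \<in> TS"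
  unfolding TS_def
proof safe
  show "1-lipschitz_on UNIV phi"
  proof (rule lipschitz_onI)
    fix x y :: real
    show "dist (phi x) (phi y) \<le> 1 * dist x y"
      using infdist_triangle_abs[of x "- {0<..<1}" y] by (simp add: phi_def dist_real_def)
  qed simp
  have "{x. phi x \<noteq> 0} \<subseteq> {0..1}"
  proof
    fix x assume "x \<in> {x. phi x \<noteq> 0}"
    then have "x \<in> {0<..<1}" using phi_zero by blast
    then show "x \<in> {0..1}" by auto
  qed
  then show "x \<in> {0..1}" if "x \<in> closure {x. phi x \<noteq> 0}" for x
    using closure_minimal[of "{x. phi x \<noteq> 0}" "{0..1}"] that by auto
qed

lemma TS_0: "(\<lambda>_. 0) \<in> TS"
  unfolding TS_def by (auto intro: lipschitz_onI)

lemma TS_cont: "\<psi> \<in> TS \<Longrightarrow> continuous_on UNIV \<psi>"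
  unfolding TS_def using lipschitz_on_continuous_on by blast

lemma TS_meas: "\<psi> \<in> TS \<Longrightarrow> \<psi> \<in> borel_measurable borel"
  using TS_cont borel_measurable_continuous_onI by blast



lemma scale_density: "0 \<le> r \<Longrightarrow> scale_measure (ennreal r) N = density N (\<lambda>_. ennreal r)"
  by (rule measure_eqI) (auto simp: emeasure_density_const)

lemma integral_scale:
  fixes f :: "'a \<Rightarrow> real"
  assumes "0 \<le> r" "f \<in> borel_measurable N"
  shows "integral\<^sup>L (scale_measure (ennreal r) N) f = r * integral\<^sup>L N f"
proof -
  have "integral\<^sup>L (scale_measure (ennreal r) N) f = integral\<^sup>L (density N (\<lambda>_. ennreal r)) f"
    by (subst scale_density[OF assms(1)]) (rule refl)
  also have "\<dots> = integral\<^sup>L N (\<lambda>x. r *\<^sub>R f x)"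
    using integral_density[of f N "\<lambda>_. r"] assms by simp
  finally show ?thesis by simp
qed

lemma radon_space: "radon M \<Longrightarrow> space M = UNIV"
  unfolding radon_def using sets_eq_imp_space_eq[of M borel] by auto

lemma radon_sets: "radon M \<Longrightarrow> sets M = sets borel"
  unfolding radon_def by auto

lemma radon_meas: "radon M \<Longrightarrow> f \<in> borel_measurable borel \<Longrightarrow> f \<in> borel_measurable M"
  using measurable_cong_sets[OF radon_sets[of M], of borel borel] by auto

lemma radon_Icc: "radon M \<Longrightarrow> emeasure M {a..b} < \<infinity>"
  unfolding radon_def using compact_Icc[of a b] by blast

lemma ri_basic:
  assumes "real_interval I" "I \<noteq> {}"
  shows "Inf I < Sup I" "{Inf I<..<Sup I} \<subseteq> I" "I \<subseteq> {Inf I..Sup I}" "I \<in> sets borel"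
proof -
  have bI: "bounded I" "is_interval I" "Inf I < Sup I"
    using assms(1) unfolding real_interval_def by blast+
  have bd1: "bdd_above I" by (rule bounded_imp_bdd_above[OF bI(1)])
  have bd2: "bdd_below I" by (rule bounded_imp_bdd_below[OF bI(1)])
  show "Inf I < Sup I" by (rule bI(3))
  show sub1: "{Inf I<..<Sup I} \<subseteq> I"
  proof
    fix x assume x: "x \<in> {Inf I<..<Sup I}"
    then have "Inf I < x" by simp
    then obtain y where y: "y \<in> I" "y < x" using cInf_less_iff[OF assms(2) bd2] by blast
    have "x < Sup I" using x by simp
    then obtain z where z: "z \<in> I" "x < z" using less_cSup_iff[OF assms(2) bd1] by blast
    have "\<forall>a\<in>I. \<forall>b\<in>I. \<forall>x. a \<le> x \<and> x \<le> b \<longrightarrow> x \<in> I" using bI(2) unfolding is_interval_1 .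
    then show "x \<in> I" using y z by (meson less_imp_le)
  qed
  show sub2: "I \<subseteq> {Inf I..Sup I}"
  proof
    fix x assume "x \<in> I"
    then have "Inf I \<le> x" "x \<le> Sup I" using cInf_lower[OF _ bd2] cSup_upper[OF _ bd1] by blast+
    then show "x \<in> {Inf I..Sup I}" by simp
  qed
  have eq: "I = {Inf I<..<Sup I} \<union> (I \<inter> {Inf I, Sup I})"
  proof (rule set_eqI)
    fix x
    show "x \<in> I \<longleftrightarrow> x \<in> {Inf I<..<Sup I} \<union> (I \<inter> {Inf I, Sup I})"
    proof
      assume x: "x \<in> I"
      then have "x \<in> {Inf I..Sup I}" using sub2 by blast
      then show "x \<in> {Inf I<..<Sup I} \<union> (I \<inter> {Inf I, Sup I})"
        using x by (cases "x = Inf I \<or> x = Sup I") auto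
    next
      assume "x \<in> {Inf I<..<Sup I} \<union> (I \<inter> {Inf I, Sup I})"
      then show "x \<in> I" using sub1 by blast
    qed
  qed
  have s1: "I \<inter> {Inf I, Sup I} \<in> sets borel"
    by (intro borel_closed finite_imp_closed finite_subset[OF Int_lower2]) simp
  have s2: "{Inf I<..<Sup I} \<in> sets borel" by simp
  have "{Inf I<..<Sup I} \<union> (I \<inter> {Inf I, Sup I}) \<in> sets borel" using s1 s2 by (rule sets.Un[rotated])
  then show "I \<in> sets borel" by (rule ssubst[of I _ "\<lambda>X. X \<in> sets borel", OF eq])
qed

lemma T_int_in: assumes "Inf I < Sup I" "T_int I x \<in> {0<..<1}" shows "x \<in> {Inf I<..<Sup I}"
  using assms unfolding T_int_def by (auto simp: field_simps)

lemma T_int_cont: "continuous_on UNIV (T_int I)"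
  unfolding T_int_def divide_inverse by (intro continuous_intros)

lemma T_int_meas: "T_int I \<in> borel_measurable borel"
  using T_int_cont borel_measurable_continuous_onI by blast

definition RI :: "real measure \<Rightarrow> real set \<Rightarrow> (real \<Rightarrow> real) \<Rightarrow> real" where
  "RI M I f = (\<integral>x. f (T_int I x) \<partial>M)"

definition good :: "(real \<Rightarrow> real) \<Rightarrow> bool" where
  "good f \<longleftrightarrow> f \<in> borel_measurable borel \<and> (\<exists>B. \<forall>t. \<bar>f t\<bar> \<le> B) \<and> (\<forall>t. t \<notin> {0<..<1} \<longrightarrow> f t = 0)"

lemma TS_good: "\<psi> \<in> TS \<Longrightarrow> good \<psi>"
  unfolding good_def using TS_meas TS_bound TS_zero by blast

lemma phi_good: "good phi"
  using TS_good phi_TS by blast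

lemma push_gen:
  fixes f :: "real \<Rightarrow> real"
  assumes "radon M" "I \<in> sets borel" "f \<in> borel_measurable borel"
  shows "integral\<^sup>L (push_I M I) f = (\<integral>x. indicator I x * f (T_int I x) \<partial>M)"
proof -
  have m: "T_int I \<in> measurable (restrict_space M I) borel"
    by (rule measurable_restrict_space1) (rule radon_meas[OF assms(1) T_int_meas])
  have "integral\<^sup>L (push_I M I) f = integral\<^sup>L (restrict_space M I) (\<lambda>x. f (T_int I x))"
    unfolding push_I_def by (rule integral_distr[OF m assms(3)])
  also have "\<dots> = (\<integral>x. indicator I x * f (T_int I x) \<partial>M)"
    by (subst integral_restrict_space) (use assms radon_space radon_sets in auto)
  finally show ?thesis .
qed

lemma push_empty: fixes f :: "real \<Rightarrow> real" shows "radon M \<Longrightarrow> f \<in> borel_measurable borel \<Longrightarrow> integral\<^sup>L (push_I M {}) f = 0"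
  using push_gen[of M "{}" f] by simp

lemma good_integrable:
  assumes "radon M" "real_interval I" "I \<noteq> {}" "good f"
  shows "integrable M (\<lambda>x. f (T_int I x))"
proof -
  obtain B where B: "\<And>t. \<bar>f t\<bar> \<le> B" and fm: "f \<in> borel_measurable borel"
    and z: "\<And>t. t \<notin> {0<..<1} \<Longrightarrow> f t = 0" using assms(4) unfolding good_def by blast
  have i: "integrable M (\<lambda>x. B * indicator {Inf I..Sup I} x)"
    using radon_Icc[OF assms(1)] radon_sets[OF assms(1)] by auto
  show ?thesis
  proof (rule Bochner_Integration.integrable_bound[OF i])
    show "(\<lambda>x. f (T_int I x)) \<in> borel_measurable M"
      by (rule radon_meas[OF assms(1)]) (use fm T_int_meas in measurable)
    show "AE x in M. norm (f (T_int I x)) \<le> norm (B * indicator {Inf I..Sup I} x)"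
    proof (rule AE_I2)
      fix x
      have "0 \<le> B" using B[of 0] by linarith
      show "norm (f (T_int I x)) \<le> norm (B * indicator {Inf I..Sup I} x)"
      proof (cases "T_int I x \<in> {0<..<1}")
        case True
        then have "x \<in> {Inf I<..<Sup I}" by (rule T_int_in[OF ri_basic(1)[OF assms(2,3)]])
        then have "x \<in> {Inf I..Sup I}" by simp
        then show ?thesis using B[of "T_int I x"] \<open>0 \<le> B\<close> by simp
      next
        case False then show ?thesis using z by simp
      qed
    qed
  qed
qed

lemma push_RI:
  assumes "radon M" "real_interval I" "I \<noteq> {}" "good f"
  shows "integral\<^sup>L (push_I M I) f = RI M I f"
proof -
  have fm: "f \<in> borel_measurable borel" and z: "\<And>t. t \<notin> {0<..<1} \<Longrightarrow> f t = 0"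
    using assms(4) unfolding good_def by auto
  have "integral\<^sup>L (push_I M I) f = (\<integral>x. indicator I x * f (T_int I x) \<partial>M)"
    by (rule push_gen[OF assms(1) ri_basic(4)[OF assms(2,3)] fm])
  also have "\<dots> = RI M I f" unfolding RI_def
  proof (rule Bochner_Integration.integral_cong[OF refl])
    fix x
    show "indicator I x * f (T_int I x) = f (T_int I x)"
    proof (cases "T_int I x \<in> {0<..<1}")
      case True
      then have "x \<in> I" using T_int_in[OF ri_basic(1)[OF assms(2,3)]] ri_basic(2)[OF assms(2,3)] by auto
      then show ?thesis by simp
    next
      case False then show ?thesis using z by simp
    qed
  qed
  finally show ?thesis .
qed

lemma c_eq: "integral\<^sup>L M (phi_I I) = RI M I phi"
  unfolding RI_def phi_I_def comp_def ..

lemma RI_phi_nonneg: "0 \<le> RI M I phi"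
  unfolding RI_def by (rule integral_nonneg_AE) (simp add: phi_nonneg)

lemma norm_phi_int:
  assumes "radon M" "real_interval I" "I \<noteq> {}" "good f"
  shows "integral\<^sup>L (norm_phi_I M I) f = (if RI M I phi = 0 then 0 else RI M I f / RI M I phi)"
proof (cases "RI M I phi = 0")
  case True then show ?thesis unfolding norm_phi_I_def Let_def c_eq by simp
next
  case False
  then have pos: "RI M I phi > 0" using RI_phi_nonneg[of M I] by linarith
  have fm: "f \<in> borel_measurable (push_I M I)"
    using assms(4) unfolding good_def push_I_def by simp
  show ?thesis using False pos unfolding norm_phi_I_def Let_def c_eq
    by (simp add: integral_scale[OF _ fm] push_RI[OF assms])
qed

lemma norm_phi_empty:
  assumes "radon M" "good f"
  shows "integral\<^sup>L (norm_phi_I M {}) f = 0"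
proof -
  have fm: "f \<in> borel_measurable (push_I M {})" "f \<in> borel_measurable borel"
    using assms(2) unfolding good_def push_I_def by simp_all
  show ?thesis unfolding norm_phi_I_def Let_def
    using RI_phi_nonneg[of M "{}"] c_eq[of M "{}"]
    by (auto simp: integral_scale[OF _ fm(1)] push_empty[OF assms(1) fm(2)])
qed

lemma radon_fin: assumes "radon M" "real_interval I" "I \<noteq> {}" shows "emeasure M I < \<infinity>"
proof -
  have "emeasure M I \<le> emeasure M {Inf I..Sup I}"
    by (rule emeasure_mono[OF ri_basic(3)[OF assms(2,3)]]) (simp add: radon_sets[OF assms(1)])
  also have "\<dots> < \<infinity>" by (rule radon_Icc[OF assms(1)])
  finally show ?thesis .
qed

lemma norm_I_int:
  assumes "radon M" "real_interval I" "I \<noteq> {}" "good f"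
  shows "integral\<^sup>L (norm_I M I) f = (if measure M I = 0 then 0 else RI M I f / measure M I)"
proof -
  have fin: "emeasure M I = ennreal (measure M I)"
    using radon_fin[OF assms(1-3)] by (simp add: emeasure_eq_ennreal_measure)
  show ?thesis
  proof (cases "measure M I = 0")
    case True then show ?thesis unfolding norm_I_def fin by simp
  next
    case False
    then have pos: "measure M I > 0" using measure_nonneg[of M I] by linarith
    have fm: "f \<in> borel_measurable (push_I M I)"
      using assms(4) unfolding good_def push_I_def by simp
    have e: "1 / ennreal (measure M I) = ennreal (1 / measure M I)"
      using divide_ennreal[of 1 "measure M I"] pos by simp
    show ?thesis using False pos unfolding norm_I_def fin e
      by (simp add: integral_scale[OF _ fm] push_RI[OF assms])
  qed
qed



lemma arith1:
  fixes X Y a b \<alpha> :: real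
  assumes "a > 0" "b > 0" "\<bar>X\<bar> \<le> a" "\<bar>X - Y\<bar> \<le> \<alpha>" "\<bar>a - b\<bar> \<le> \<alpha>"
  shows "\<bar>X / a - Y / b\<bar> \<le> 2 * \<alpha> / b"
proof -
  define u where "u = X / a"
  have u1: "\<bar>u\<bar> \<le> 1" using assms(1,3) unfolding u_def by (simp add: divide_le_eq_1)
  have Xu: "X = u * a" unfolding u_def using assms(1) by simp
  have e: "X / a - Y / b = ((X - Y) + u * (b - a)) / b"
    using assms(1,2) unfolding Xu by (simp add: divide_simps) (simp add: algebra_simps)
  have t2: "\<bar>u * (b - a)\<bar> \<le> \<alpha>"
  proof -
    have "\<bar>u * (b - a)\<bar> = \<bar>u\<bar> * \<bar>b - a\<bar>" by (rule abs_mult)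
    also have "\<dots> \<le> 1 * \<bar>b - a\<bar>" by (rule mult_right_mono[OF u1]) simp
    also have "\<dots> \<le> \<alpha>" using assms(5) by (simp add: abs_minus_commute)
    finally show ?thesis .
  qed
  have "\<bar>(X - Y) + u * (b - a)\<bar> \<le> 2 * \<alpha>" using t2 assms(4) abs_triangle_ineq[of "X - Y" "u * (b - a)"] by linarith
  then have "\<bar>(X - Y) + u * (b - a)\<bar> / b \<le> 2 * \<alpha> / b" using assms(2) by (simp add: divide_right_mono)
  then show ?thesis unfolding e using assms(2) by simp
qed

lemma abs_div_le1: fixes r c :: real assumes "\<bar>r\<bar> \<le> c" shows "\<bar>r / c\<bar> \<le> 1"
proof (cases "c = 0")
  case True then show ?thesis by simp
next
  case False
  then have "c > 0" using assms abs_ge_zero[of r] by linarith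
  then show ?thesis using assms by (simp add: abs_divide divide_le_eq)
qed
lemma abs_div_le: fixes r c m :: real assumes "\<bar>r\<bar> \<le> c" "0 < m" shows "\<bar>r / m\<bar> \<le> c / m"
  using assms by (simp add: abs_divide divide_right_mono)

lemma W1_le:
  assumes "\<And>\<psi>. \<psi> \<in> TS \<Longrightarrow> \<bar>integral\<^sup>L m1 \<psi> - integral\<^sup>L m2 \<psi>\<bar> \<le> B"
  shows "W1 m1 m2 \<le> B"
  unfolding W1_TS using TS_0 by (auto intro!: cSUP_least assms)

lemma W1_ge:
  assumes "\<And>\<psi>. \<psi> \<in> TS \<Longrightarrow> \<bar>integral\<^sup>L m1 \<psi> - integral\<^sup>L m2 \<psi>\<bar> \<le> B" "\<psi> \<in> TS"
  shows "\<bar>integral\<^sup>L m1 \<psi> - integral\<^sup>L m2 \<psi>\<bar> \<le> W1 m1 m2"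
  unfolding W1_TS by (rule cSUP_upper[OF assms(2)]) (use assms(1) in \<open>auto intro!: bdd_aboveI2\<close>)

lemma W1_nonneg:
  assumes "\<And>\<psi>. \<psi> \<in> TS \<Longrightarrow> \<bar>integral\<^sup>L m1 \<psi> - integral\<^sup>L m2 \<psi>\<bar> \<le> B"
  shows "0 \<le> W1 m1 m2"
  using W1_ge[OF assms TS_0] by simp

lemma radon_bounded: assumes "radon M" "bounded A" shows "emeasure M A < \<infinity>"
proof -
  have "emeasure M (closure A) < \<infinity>" using assms unfolding radon_def by auto
  moreover have "closure A \<in> sets M" using radon_sets[OF assms(1)] by simp
  ultimately show ?thesis using emeasure_mono[OF closure_subset, of A M] by (meson order.strict_trans1)
qed

lemma radon_fmeas: "radon M \<Longrightarrow> bounded A \<Longrightarrow> A \<in> sets borel \<Longrightarrow> A \<in> fmeasurable M"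
  using radon_bounded[of M A] radon_sets[of M] unfolding fmeasurable_def by auto

lemma RI_abs_le:
  assumes "radon M" "real_interval I" "I \<noteq> {}" "\<psi> \<in> TS"
  shows "\<bar>RI M I \<psi>\<bar> \<le> RI M I phi"
proof -
  have i1: "integrable M (\<lambda>x. \<psi> (T_int I x))" using good_integrable[OF assms(1-3) TS_good[OF assms(4)]] .
  have i2: "integrable M (\<lambda>x. phi (T_int I x))" using good_integrable[OF assms(1-3) phi_good] .
  have "\<bar>RI M I \<psi>\<bar> \<le> (\<integral>x. \<bar>\<psi> (T_int I x)\<bar> \<partial>M)"
    unfolding RI_def using integral_norm_bound[of M "\<lambda>x. \<psi> (T_int I x)"] by simp
  also have "\<dots> \<le> RI M I phi" unfolding RI_def
    by (rule integral_mono) (use i1 i2 TS_le_phi[OF assms(4)] in auto)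
  finally show ?thesis .
qed

lemma RI_phi_upper:
  assumes "radon M" "real_interval I" "I \<noteq> {}"
  shows "RI M I phi \<le> measure M {Inf I<..<Sup I} / 2"
proof -
  have i2: "integrable M (\<lambda>x. phi (T_int I x))" using good_integrable[OF assms(1-3) phi_good] .
  have fin: "emeasure M {Inf I<..<Sup I} < \<infinity>" by (rule radon_bounded[OF assms(1)]) simp
  have i3: "integrable M (\<lambda>x. indicator {Inf I<..<Sup I} x / 2 :: real)"
    using fin radon_sets[OF assms(1)] by auto
  have "RI M I phi \<le> (\<integral>x. indicator {Inf I<..<Sup I} x / 2 \<partial>M)" unfolding RI_def
  proof (rule integral_mono[OF i2 i3])
    fix x
    show "phi (T_int I x) \<le> indicator {Inf I<..<Sup I} x / 2"
      using phi_le_half[of "T_int I x"] phi_zero[of "T_int I x"]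
        T_int_in[OF ri_basic(1)[OF assms(2,3)], of x]
      by (cases "T_int I x \<in> {0<..<1}") auto
  qed
  also have "\<dots> = measure M {Inf I<..<Sup I} / 2"
    using radon_space[OF assms(1)] by simp
  finally show ?thesis .
qed

lemma RI_phi_lower:
  assumes "radon M" "real_interval I" "I \<noteq> {}"
  shows "measure M (ball ((Inf I + Sup I)/2) ((Sup I - Inf I)/4)) / 4 \<le> RI M I phi"
proof -
  let ?B = "ball ((Inf I + Sup I)/2) ((Sup I - Inf I)/4)"
  have ab: "Inf I < Sup I" using ri_basic(1)[OF assms(2,3)] .
  have i2: "integrable M (\<lambda>x. phi (T_int I x))" using good_integrable[OF assms(1-3) phi_good] .
  have fin: "emeasure M ?B < \<infinity>" by (rule radon_bounded[OF assms(1)]) simp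
  have i3: "integrable M (\<lambda>x. indicator ?B x / 4 :: real)"
    using fin radon_sets[OF assms(1)] by auto
  have "measure M ?B / 4 = (\<integral>x. indicator ?B x / 4 \<partial>M)"
    using radon_space[OF assms(1)] by simp
  also have "\<dots> \<le> RI M I phi" unfolding RI_def
  proof (rule integral_mono[OF i3 i2])
    fix x
    show "indicator ?B x / 4 \<le> phi (T_int I x)"
    proof (cases "x \<in> ?B")
      case True
      then have d: "\<bar>(Inf I + Sup I)/2 - x\<bar> < (Sup I - Inf I)/4" by (simp add: dist_real_def)
      then have d1: "(Inf I + Sup I)/2 - x < (Sup I - Inf I)/4" and d2: "- ((Inf I + Sup I)/2 - x) < (Sup I - Inf I)/4"
        unfolding abs_less_iff by blast+
      have x1a: "(Sup I - Inf I)/4 \<le> x - Inf I" using d1 by (simp add: field_simps)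
      have x1b: "x - Inf I \<le> 3 * ((Sup I - Inf I)/4)" using d2 by (simp add: field_simps)
      note x1 = x1a x1b
      have p: "Sup I - Inf I > 0" using ab by simp
      have "1/4 \<le> (x - Inf I) / (Sup I - Inf I)" using x1(1) p by (simp add: le_divide_eq)
      moreover have "(x - Inf I) / (Sup I - Inf I) \<le> 3/4" using x1(2) p by (simp add: divide_le_eq)
      ultimately have "T_int I x \<in> {1/4..3/4}" unfolding T_int_def by simp
      then show ?thesis using True phi_quarter by simp
    next
      case False then show ?thesis using phi_nonneg by simp
    qed
  qed
  finally show ?thesis .
qed

lemma norm_phi_abs_le:
  assumes "radon M" "real_interval I" "\<psi> \<in> TS"
  shows "\<bar>integral\<^sup>L (norm_phi_I M I) \<psi>\<bar> \<le> 1"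
proof (cases "I = {}")
  case True then show ?thesis using norm_phi_empty[OF assms(1) TS_good[OF assms(3)]] by simp
next
  case False
  have eq: "integral\<^sup>L (norm_phi_I M I) \<psi> = (if RI M I phi = 0 then 0 else RI M I \<psi> / RI M I phi)"
    by (rule norm_phi_int[OF assms(1,2) False TS_good[OF assms(3)]])
  have "\<bar>RI M I \<psi> / RI M I phi\<bar> \<le> 1"
    by (rule abs_div_le1[OF RI_abs_le[OF assms(1,2) False assms(3)]])
  then show ?thesis unfolding eq by simp
qed

lemma alpha_s_diff_le:
  assumes "radon \<mu>" "radon \<nu>" "real_interval I" "\<psi> \<in> TS"
  shows "\<bar>integral\<^sup>L (norm_phi_I \<mu> I) \<psi> - integral\<^sup>L (norm_phi_I \<nu> I) \<psi>\<bar> \<le> 2"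
  using norm_phi_abs_le[OF assms(1,3,4)] norm_phi_abs_le[OF assms(2,3,4)] by linarith

lemma alpha_s_le2: "radon \<mu> \<Longrightarrow> radon \<nu> \<Longrightarrow> real_interval I \<Longrightarrow> alpha_s \<mu> \<nu> I \<le> 2"
  unfolding alpha_s_def by (rule W1_le) (rule alpha_s_diff_le)

lemma alpha_s_nonneg: "radon \<mu> \<Longrightarrow> radon \<nu> \<Longrightarrow> real_interval I \<Longrightarrow> 0 \<le> alpha_s \<mu> \<nu> I"
  unfolding alpha_s_def by (rule W1_nonneg) (rule alpha_s_diff_le)

lemma alpha_s_ge:
  "radon \<mu> \<Longrightarrow> radon \<nu> \<Longrightarrow> real_interval I \<Longrightarrow> \<psi> \<in> TS \<Longrightarrow>
   \<bar>integral\<^sup>L (norm_phi_I \<mu> I) \<psi> - integral\<^sup>L (norm_phi_I \<nu> I) \<psi>\<bar> \<le> alpha_s \<mu> \<nu> I"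
  unfolding alpha_s_def by (rule W1_ge) (rule alpha_s_diff_le)



lemma meas_open_le_I:
  assumes "radon M" "real_interval I" "I \<noteq> {}"
  shows "measure M {Inf I<..<Sup I} \<le> measure M I"
  by (rule measure_mono_fmeasurable[OF ri_basic(2)[OF assms(2,3)]])
     (use assms radon_sets ri_basic(4)[OF assms(2,3)] in \<open>auto intro!: radon_fmeas simp: real_interval_def\<close>)

lemma RI_phi_le_mI:
  assumes "radon M" "real_interval I" "I \<noteq> {}"
  shows "RI M I phi \<le> measure M I / 2"
  using RI_phi_upper[OF assms] meas_open_le_I[OF assms] by linarith

lemma norm_I_abs_le:
  assumes "radon M" "real_interval I" "I \<noteq> {}" "\<psi> \<in> TS"
  shows "\<bar>integral\<^sup>L (norm_I M I) \<psi>\<bar> \<le> 1"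
proof -
  have eq: "integral\<^sup>L (norm_I M I) \<psi> = (if measure M I = 0 then 0 else RI M I \<psi> / measure M I)"
    by (rule norm_I_int[OF assms(1-3) TS_good[OF assms(4)]])
  have "\<bar>RI M I \<psi>\<bar> \<le> measure M I"
    using RI_abs_le[OF assms] RI_phi_le_mI[OF assms(1-3)] measure_nonneg[of M I] by linarith
  then have "\<bar>RI M I \<psi> / measure M I\<bar> \<le> 1" by (rule abs_div_le1)
  then show ?thesis unfolding eq by simp
qed

lemma alpha_ge:
  assumes "radon \<mu>" "radon \<nu>" "real_interval I" "I \<noteq> {}" "\<psi> \<in> TS"
  shows "\<bar>integral\<^sup>L (norm_I \<mu> I) \<psi> - integral\<^sup>L (norm_I \<nu> I) \<psi>\<bar> \<le> alpha \<mu> \<nu> I"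
  unfolding alpha_def
proof (rule W1_ge[OF _ assms(5)])
  fix \<psi> assume p: "\<psi> \<in> TS"
  have "\<bar>integral\<^sup>L (norm_I \<mu> I) \<psi> - integral\<^sup>L (norm_I \<nu> I) \<psi>\<bar>
     \<le> \<bar>integral\<^sup>L (norm_I \<mu> I) \<psi>\<bar> + \<bar>integral\<^sup>L (norm_I \<nu> I) \<psi>\<bar>"
    by (rule abs_triangle_ineq4)
  then show "\<bar>integral\<^sup>L (norm_I \<mu> I) \<psi> - integral\<^sup>L (norm_I \<nu> I) \<psi>\<bar> \<le> 2"
    using norm_I_abs_le[OF assms(1,3,4) p] norm_I_abs_le[OF assms(2,3,4) p] by linarith
qed

lemma part2:
  assumes rm: "radon \<mu>" and rn: "radon \<nu>" and ri: "real_interval I"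
    and pos: "emeasure \<nu> I > 0" and bpos: "integral\<^sup>L (norm_I \<nu> I) phi > 0"
  shows "alpha_s \<mu> \<nu> I \<le> 2 * alpha \<mu> \<nu> I / integral\<^sup>L (norm_I \<nu> I) phi"
proof -
  have ne: "I \<noteq> {}" using pos by auto
  define b where "b = integral\<^sup>L (norm_I \<nu> I) phi"
  define \<alpha> where "\<alpha> = alpha \<mu> \<nu> I"
  have mnu: "measure \<nu> I > 0"
    using pos radon_fin[OF rn ri ne] by (simp add: emeasure_eq_ennreal_measure)
  have bdef: "b = RI \<nu> I phi / measure \<nu> I"
    using norm_I_int[OF rn ri ne phi_good] mnu unfolding b_def by simp
  have bp: "b > 0" using bpos unfolding b_def .
  then have Bn: "RI \<nu> I phi > 0" using mnu bdef by (simp add: zero_less_divide_iff)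
  have ag: "\<And>\<psi>. \<psi> \<in> TS \<Longrightarrow> \<bar>integral\<^sup>L (norm_I \<mu> I) \<psi> - integral\<^sup>L (norm_I \<nu> I) \<psi>\<bar> \<le> \<alpha>"
    unfolding \<alpha>_def by (rule alpha_ge[OF rm rn ri ne])
  have abphi: "\<bar>integral\<^sup>L (norm_I \<mu> I) phi - b\<bar> \<le> \<alpha>" using ag[OF phi_TS] unfolding b_def .
  show ?thesis
    unfolding alpha_s_def b_def[symmetric] \<alpha>_def[symmetric]
  proof (rule W1_le)
    fix \<psi> assume psi: "\<psi> \<in> TS"
    have Snu: "integral\<^sup>L (norm_phi_I \<nu> I) \<psi> = RI \<nu> I \<psi> / RI \<nu> I phi"
      using norm_phi_int[OF rn ri ne TS_good[OF psi]] Bn by simp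
    have Pnu: "integral\<^sup>L (norm_I \<nu> I) \<psi> = RI \<nu> I \<psi> / measure \<nu> I"
      using norm_I_int[OF rn ri ne TS_good[OF psi]] mnu by simp
    show "\<bar>integral\<^sup>L (norm_phi_I \<mu> I) \<psi> - integral\<^sup>L (norm_phi_I \<nu> I) \<psi>\<bar> \<le> 2 * \<alpha> / b"
    proof (cases "RI \<mu> I phi = 0")
      case True
      then have S0: "integral\<^sup>L (norm_phi_I \<mu> I) \<psi> = 0"
        using norm_phi_int[OF rm ri ne TS_good[OF psi]] by simp
      have a0: "integral\<^sup>L (norm_I \<mu> I) phi = 0"
        using norm_I_int[OF rm ri ne phi_good] True by simp
      have "b \<le> \<alpha>" using abphi a0 by simp
      then have "2 \<le> 2 * \<alpha> / b" using bp by (simp add: field_simps)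
      moreover have "\<bar>integral\<^sup>L (norm_phi_I \<nu> I) \<psi>\<bar> \<le> 1" by (rule norm_phi_abs_le[OF rn ri psi])
      ultimately show ?thesis using S0 by simp
    next
      case False
      then have A: "RI \<mu> I phi > 0" using RI_phi_nonneg[of \<mu> I] by linarith
      then have mmu: "measure \<mu> I > 0" using RI_phi_le_mI[OF rm ri ne] by linarith
      have Smu: "integral\<^sup>L (norm_phi_I \<mu> I) \<psi> = RI \<mu> I \<psi> / RI \<mu> I phi"
        using norm_phi_int[OF rm ri ne TS_good[OF psi]] False by simp
      have Pmu: "integral\<^sup>L (norm_I \<mu> I) \<psi> = RI \<mu> I \<psi> / measure \<mu> I"
        using norm_I_int[OF rm ri ne TS_good[OF psi]] mmu by simp
      have amu: "integral\<^sup>L (norm_I \<mu> I) phi = RI \<mu> I phi / measure \<mu> I"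
        using norm_I_int[OF rm ri ne phi_good] mmu by simp
      have key: "\<bar>(RI \<mu> I \<psi> / measure \<mu> I) / (RI \<mu> I phi / measure \<mu> I)
               - (RI \<nu> I \<psi> / measure \<nu> I) / b\<bar> \<le> 2 * \<alpha> / b"
      proof (rule arith1)
        show "RI \<mu> I phi / measure \<mu> I > 0" using A mmu by simp
        show "b > 0" by (rule bp)
        show "\<bar>RI \<mu> I \<psi> / measure \<mu> I\<bar> \<le> RI \<mu> I phi / measure \<mu> I"
          by (rule abs_div_le[OF RI_abs_le[OF rm ri ne psi] mmu])
        show "\<bar>RI \<mu> I \<psi> / measure \<mu> I - RI \<nu> I \<psi> / measure \<nu> I\<bar> \<le> \<alpha>"
          using ag[OF psi] by (simp only: Pmu Pnu)
        show "\<bar>RI \<mu> I phi / measure \<mu> I - b\<bar> \<le> \<alpha>" using abphi amu by simp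
      qed
      have e1: "(RI \<mu> I \<psi> / measure \<mu> I) / (RI \<mu> I phi / measure \<mu> I) = RI \<mu> I \<psi> / RI \<mu> I phi"
        using mmu by simp
      have e2: "(RI \<nu> I \<psi> / measure \<nu> I) / b = RI \<nu> I \<psi> / RI \<nu> I phi"
        using mnu Bn unfolding bdef by simp
      show ?thesis using key Smu Snu unfolding e1 e2 by simp
    qed
  qed
qed



lemma doubling_mono: "doubling D \<nu> \<Longrightarrow> D \<le> D' \<Longrightarrow> doubling D' \<nu>"
  unfolding doubling_def
  by (meson ennreal_leI mult_right_mono order_trans zero_le)

lemma doubling_iter:
  assumes "doubling D \<nu>" "1 \<le> D" "r > 0"
  shows "emeasure \<nu> (ball x (2^n * r)) \<le> ennreal (D^n) * emeasure \<nu> (ball x r)"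
proof (induction n)
  case 0 then show ?case by simp
next
  case (Suc n)
  have "emeasure \<nu> (ball x (2^Suc n * r)) = emeasure \<nu> (ball x (2 * (2^n * r)))" by (simp add: mult.assoc)
  also have "\<dots> \<le> ennreal D * emeasure \<nu> (ball x (2^n * r))"
    using assms(1,3) unfolding doubling_def by simp
  also have "\<dots> \<le> ennreal D * (ennreal (D^n) * emeasure \<nu> (ball x r))"
    by (rule mult_left_mono[OF Suc]) simp
  also have "\<dots> = ennreal (D^Suc n) * emeasure \<nu> (ball x r)"
  proof -
    have h: "ennreal (D^Suc n) = ennreal D * ennreal (D^n)"
      using assms(2) by (simp add: ennreal_mult)
    show ?thesis unfolding h by (simp only: mult.assoc)
  qed
  finally show ?case .
qed

lemma doubling_iter_measure:
  assumes "radon \<nu>" "doubling D \<nu>" "1 \<le> D" "r > 0"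
  shows "measure \<nu> (ball x (2^n * r)) \<le> D^n * measure \<nu> (ball x r)"
proof -
  have f1: "emeasure \<nu> (ball x (2^n * r)) = ennreal (measure \<nu> (ball x (2^n * r)))"
    by (rule emeasure_eq_ennreal_measure) (use radon_bounded[OF assms(1), of "ball x (2^n * r)"] in simp)
  have f2: "emeasure \<nu> (ball x r) = ennreal (measure \<nu> (ball x r))"
    by (rule emeasure_eq_ennreal_measure) (use radon_bounded[OF assms(1), of "ball x r"] in simp)
  have "ennreal (measure \<nu> (ball x (2^n * r))) \<le> ennreal (D^n * measure \<nu> (ball x r))"
    using doubling_iter[OF assms(2-4), of x n] assms(3) unfolding f1 f2
    by (simp add: ennreal_mult)
  then show ?thesis using assms(3) by (simp add: ennreal_le_iff)
qed

definition resc :: "real set \<Rightarrow> real set \<Rightarrow> (real \<Rightarrow> real) \<Rightarrow> real \<Rightarrow> real" where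
  "resc I J \<psi> t = (ilen I / ilen J) * \<psi> (T_int I (Inf J + t * ilen J))"

lemma sub_bounds:
  assumes "real_interval I" "real_interval J" "I \<subseteq> J" "I \<noteq> {}"
  shows "Inf J \<le> Inf I" "Sup I \<le> Sup J" "J \<noteq> {}"
proof -
  have b: "bdd_below J" "bdd_above J" using assms(2) unfolding real_interval_def
    by (auto intro: bounded_imp_bdd_above bounded_imp_bdd_below)
  show "Inf J \<le> Inf I" by (rule cInf_superset_mono[OF assms(4) b(1) assms(3)])
  show "Sup I \<le> Sup J" by (rule cSup_subset_mono[OF assms(4) b(2) assms(3)])
  show "J \<noteq> {}" using assms(3,4) by auto
qed

lemma resc_T:
  assumes "real_interval J" "J \<noteq> {}"
  shows "resc I J \<psi> (T_int J x) = (ilen I / ilen J) * \<psi> (T_int I x)"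
proof -
  have "Inf J < Sup J" using ri_basic(1)[OF assms] .
  then have "Inf J + T_int J x * ilen J = x" unfolding T_int_def ilen_def by simp
  then show ?thesis unfolding resc_def by simp
qed

lemma resc_TS:
  assumes "real_interval I" "real_interval J" "I \<subseteq> J" "I \<noteq> {}" "\<psi> \<in> TS"
  shows "resc I J \<psi> \<in> TS"
proof -
  have ab: "Inf I < Sup I" using ri_basic(1)[OF assms(1,4)] .
  have sb: "Inf J \<le> Inf I" "Sup I \<le> Sup J" using sub_bounds[OF assms(1-4)] by auto
  define L where "L = ilen J"
  define L' where "L' = ilen I"
  have L'p: "L' > 0" using ab unfolding L'_def ilen_def by simp
  have Lp: "L > 0" using ab sb unfolding L_def ilen_def by simp
  have lip: "1-lipschitz_on UNIV (resc I J \<psi>)"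
  proof (rule lipschitz_onI)
    fix t u :: real
    have "\<bar>resc I J \<psi> t - resc I J \<psi> u\<bar>
        = (L' / L) * \<bar>\<psi> (T_int I (Inf J + t * L)) - \<psi> (T_int I (Inf J + u * L))\<bar>"
    proof -
      have "resc I J \<psi> t - resc I J \<psi> u
          = (L' / L) * (\<psi> (T_int I (Inf J + t * L)) - \<psi> (T_int I (Inf J + u * L)))"
        unfolding resc_def L_def[symmetric] L'_def[symmetric] by (simp add: right_diff_distrib)
      moreover have "\<bar>L' / L\<bar> = L' / L" using Lp L'p by simp
      ultimately show ?thesis by (simp only: abs_mult)
    qed
    also have "\<dots> \<le> (L' / L) * \<bar>T_int I (Inf J + t * L) - T_int I (Inf J + u * L)\<bar>"
      by (rule mult_left_mono[OF TS_lip[OF assms(5)]]) (use Lp L'p in simp)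
    also have "T_int I (Inf J + t * L) - T_int I (Inf J + u * L) = (t - u) * L / L'"
    proof -
      have "T_int I (Inf J + t * L) - T_int I (Inf J + u * L)
          = ((Inf J + t * L) - (Inf J + u * L)) / L'"
        unfolding T_int_def L'_def ilen_def by (simp add: diff_divide_distrib[symmetric])
      also have "(Inf J + t * L) - (Inf J + u * L) = (t - u) * L" by (simp add: left_diff_distrib)
      finally show ?thesis .
    qed
    also have "(L' / L) * \<bar>(t - u) * L / L'\<bar> = \<bar>t - u\<bar>"
      using Lp L'p by (simp add: abs_mult abs_div_pos)
    finally show "dist (resc I J \<psi> t) (resc I J \<psi> u) \<le> 1 * dist t u" by (simp add: dist_real_def)
  qed simp
  have "{t. resc I J \<psi> t \<noteq> 0} \<subseteq> {0..1}"
  proof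
    fix t assume "t \<in> {t. resc I J \<psi> t \<noteq> 0}"
    then have "\<psi> (T_int I (Inf J + t * L)) \<noteq> 0" unfolding resc_def L_def by auto
    then have "T_int I (Inf J + t * L) \<in> {0<..<1}" using TS_zero[OF assms(5)] by blast
    then have "Inf J + t * L \<in> {Inf I<..<Sup I}" using T_int_in[OF ab] by blast
    then have "Inf J \<le> Inf J + t * L" "Inf J + t * L \<le> Inf J + 1 * L" using sb unfolding L_def ilen_def by auto
    then show "t \<in> {0..1}" using Lp by (auto simp: mult_le_cancel_right zero_le_mult_iff)
  qed
  then have "closure {t. resc I J \<psi> t \<noteq> 0} \<subseteq> {0..1}" by (rule closure_minimal) simp
  then show ?thesis unfolding TS_def using lip by simp
qed

lemma RI_resc:
  assumes "real_interval J" "J \<noteq> {}"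
  shows "RI M J (resc I J \<psi>) = (ilen I / ilen J) * RI M I \<psi>"
  unfolding RI_def resc_T[OF assms] by simp



lemma part3_psi:
  assumes rm: "radon \<mu>" and rn: "radon \<nu>" and dbl: "doubling D \<nu>" and D1: "1 \<le> D"
    and th: "\<theta> > 0" and k: "4 / \<theta> < 2 ^ k"
    and rI: "real_interval I" and rJ: "real_interval J" and sub: "I \<subseteq> J"
    and len: "ilen I \<ge> \<theta> * ilen J" and ne: "I \<noteq> {}" and psi: "\<psi> \<in> TS"
  shows "\<bar>integral\<^sup>L (norm_phi_I \<mu> I) \<psi> - integral\<^sup>L (norm_phi_I \<nu> I) \<psi>\<bar>
          \<le> (4 * D ^ k / \<theta> + 1) * alpha_s \<mu> \<nu> J"
proof -
  define \<alpha> where "\<alpha> = alpha_s \<mu> \<nu> J"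
  define C where "C = 4 * D ^ k / \<theta> + 1"
  have neJ: "J \<noteq> {}" using sub_bounds[OF rI rJ sub ne] by simp
  have sb: "Inf J \<le> Inf I" "Sup I \<le> Sup J" using sub_bounds[OF rI rJ sub ne] by auto
  have abI: "Inf I < Sup I" using ri_basic(1)[OF rI ne] .
  define L where "L = ilen J"
  define L' where "L' = ilen I"
  define s where "s = L' / L"
  have L'p: "L' > 0" using abI unfolding L'_def ilen_def by simp
  have Lp: "L > 0" using abI sb unfolding L_def ilen_def by simp
  have sp: "s \<ge> \<theta>" using len Lp unfolding s_def L_def[symmetric] L'_def[symmetric] by (simp add: field_simps)
  have spos: "s > 0" using sp th by simp
  have Dk: "D ^ k \<ge> 1" using D1 by simp
  have a0: "0 \<le> \<alpha>" unfolding \<alpha>_def by (rule alpha_s_nonneg[OF rm rn rJ])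
  have aG: "\<And>f. f \<in> TS \<Longrightarrow> \<bar>integral\<^sup>L (norm_phi_I \<mu> J) f - integral\<^sup>L (norm_phi_I \<nu> J) f\<bar> \<le> \<alpha>"
    unfolding \<alpha>_def by (rule alpha_s_ge[OF rm rn rJ])
  have C1: "1 \<le> C" unfolding C_def using Dk th by simp
  have Ca: "\<alpha> \<le> C * \<alpha>" using C1 a0 by (simp add: mult_le_cancel_right1)
  have pt: "resc I J \<psi> \<in> TS" by (rule resc_TS[OF rI rJ sub ne psi])
  have ft: "resc I J phi \<in> TS" by (rule resc_TS[OF rI rJ sub ne phi_TS])
  have RIr: "\<And>M f. RI M J (resc I J f) = s * RI M I f"
    unfolding s_def L_def L'_def by (rule RI_resc[OF rJ neJ])
  have SJ: "\<And>M f. radon M \<Longrightarrow> f \<in> TS \<Longrightarrow> integral\<^sup>L (norm_phi_I M J) f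
       = (if RI M J phi = 0 then 0 else RI M J f / RI M J phi)"
    using norm_phi_int[OF _ rJ neJ TS_good] by blast
  have SI: "\<And>M f. radon M \<Longrightarrow> f \<in> TS \<Longrightarrow> integral\<^sup>L (norm_phi_I M I) f
       = (if RI M I phi = 0 then 0 else RI M I f / RI M I phi)"
    using norm_phi_int[OF _ rI ne TS_good] by blast
  have sphi_le: "\<And>M. radon M \<Longrightarrow> s * RI M I phi \<le> RI M J phi"
    using RI_abs_le[OF _ rJ neJ ft] RIr by (metis abs_ge_self order_trans)
  have Ipos: "\<And>M. RI M I phi \<ge> 0" by (rule RI_phi_nonneg)
  have Jpos: "\<And>M. RI M J phi \<ge> 0" by (rule RI_phi_nonneg)
  have abs1: "\<And>M. radon M \<Longrightarrow> \<bar>integral\<^sup>L (norm_phi_I M I) \<psi>\<bar> \<le> 1"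
    using norm_phi_abs_le[OF _ rI psi] by blast
  define m where "m = (Inf I + Sup I) / 2"
  define r where "r = L' / 4"
  have rp: "r > 0" using L'p unfolding r_def by simp
  have sub_ball: "{Inf J<..<Sup J} \<subseteq> ball m (2^k * r)"
  proof
    fix x assume x: "x \<in> {Inf J<..<Sup J}"
    define w where "w = (4 / \<theta>) * r"
    have h1: "w \<le> 2^k * r" unfolding w_def by (rule mult_right_mono) (use k rp in auto)
    have h2: "w = L' / \<theta>" unfolding w_def r_def by simp
    have h3: "L \<le> L' / \<theta>" using len th unfolding L_def[symmetric] L'_def[symmetric] by (simp add: field_simps)
    have h4: "\<bar>m - x\<bar> < L" using x sb abI unfolding m_def L_def ilen_def by (auto simp: abs_less_iff field_simps)
    have "\<bar>m - x\<bar> < 2^k * r" using h1 h2 h3 h4 by linarith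
    then show "x \<in> ball m (2^k * r)" by (simp add: dist_real_def)
  qed
  have dbl_est: "RI \<nu> J phi \<le> 2 * D ^ k * RI \<nu> I phi"
  proof -
    have "RI \<nu> J phi \<le> measure \<nu> {Inf J<..<Sup J} / 2" by (rule RI_phi_upper[OF rn rJ neJ])
    also have "measure \<nu> {Inf J<..<Sup J} \<le> measure \<nu> (ball m (2^k * r))"
      by (rule measure_mono_fmeasurable[OF sub_ball]) (auto simp: radon_sets[OF rn] intro!: radon_fmeas[OF rn])
    also have "\<dots> \<le> D ^ k * measure \<nu> (ball m r)" by (rule doubling_iter_measure[OF rn dbl D1 rp])
    also have "measure \<nu> (ball m r) \<le> 4 * RI \<nu> I phi"
      using RI_phi_lower[OF rn rI ne] unfolding m_def r_def L'_def ilen_def by simp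
    finally show ?thesis using Dk by (simp add: mult_left_mono)
  qed
  have main: "\<bar>integral\<^sup>L (norm_phi_I \<mu> I) \<psi> - integral\<^sup>L (norm_phi_I \<nu> I) \<psi>\<bar> \<le> C * \<alpha>"
  proof (cases "RI \<nu> J phi = 0")
    case True
    then have Bn0: "RI \<nu> I phi = 0" using sphi_le[OF rn] Ipos[of \<nu>] spos
      by (metis mult_pos_pos order.not_eq_order_implies_strict not_le)
    then have Snu: "integral\<^sup>L (norm_phi_I \<nu> I) \<psi> = 0" using SI[OF rn psi] by simp
    show ?thesis
    proof (cases "RI \<mu> I phi = 0")
      case True
      then show ?thesis using SI[OF rm psi] Snu C1 a0 by simp
    next
      case False
      then have "RI \<mu> J phi > 0" using sphi_le[OF rm] Ipos[of \<mu>] spos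
        by (metis mult_pos_pos order.not_eq_order_implies_strict order.strict_trans2)
      then have "integral\<^sup>L (norm_phi_I \<mu> J) phi = 1" "integral\<^sup>L (norm_phi_I \<nu> J) phi = 0"
        using SJ[OF rm phi_TS] SJ[OF rn phi_TS] \<open>RI \<nu> J phi = 0\<close> by auto
      then have "1 \<le> \<alpha>" using aG[OF phi_TS] by simp
      moreover have "\<bar>integral\<^sup>L (norm_phi_I \<mu> I) \<psi> - integral\<^sup>L (norm_phi_I \<nu> I) \<psi>\<bar>
          = \<bar>integral\<^sup>L (norm_phi_I \<mu> I) \<psi>\<bar>" using Snu by simp
      ultimately show ?thesis using abs1[OF rm] Ca by linarith
    qed
  next
    case False
    then have BJ: "RI \<nu> J phi > 0" using Jpos[of \<nu>] by linarith
    have BI: "RI \<nu> I phi > 0" using dbl_est BJ Dk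
      by (metis mult_nonneg_nonneg Ipos order.not_eq_order_implies_strict not_le zero_le_numeral
          mult_zero_right order_trans dual_order.strict_trans1 less_numeral_extra(4) mult_eq_0_iff)
    define q where "q = s * RI \<nu> I phi / RI \<nu> J phi"
    have qS: "integral\<^sup>L (norm_phi_I \<nu> J) (resc I J phi) = q"
      using SJ[OF rn ft] BJ RIr unfolding q_def by simp
    have qlow: "\<theta> / (2 * D ^ k) \<le> q"
    proof -
      have "1 / (2 * D ^ k) \<le> RI \<nu> I phi / RI \<nu> J phi"
        using dbl_est BJ Dk by (simp add: field_simps)
      then have "\<theta> * (1 / (2 * D ^ k)) \<le> s * (RI \<nu> I phi / RI \<nu> J phi)"
        using sp th Dk by (intro mult_mono) auto
      then show ?thesis unfolding q_def by simp
    qed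
    have qpos: "q > 0" using qlow th Dk by (smt (verit) divide_pos_pos)
    have Snu: "integral\<^sup>L (norm_phi_I \<nu> I) \<psi> = RI \<nu> I \<psi> / RI \<nu> I phi" using SI[OF rn psi] BI by simp
    show ?thesis
    proof (cases "RI \<mu> I phi = 0")
      case True
      then have Smu: "integral\<^sup>L (norm_phi_I \<mu> I) \<psi> = 0" using SI[OF rm psi] by simp
      have "integral\<^sup>L (norm_phi_I \<mu> J) (resc I J phi) = 0"
        using SJ[OF rm ft] RIr True by simp
      then have "q \<le> \<alpha>" using aG[OF ft] qS by simp
      then have "\<theta> / (2 * D ^ k) \<le> \<alpha>" using qlow by simp
      then have "(4 * D ^ k / \<theta>) * (\<theta> / (2 * D ^ k)) \<le> (4 * D ^ k / \<theta>) * \<alpha>"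
        using th Dk by (intro mult_left_mono) auto
      moreover have "(4 * D ^ k / \<theta>) * (\<theta> / (2 * D ^ k)) = 2"
      proof -
        have "D ^ k \<noteq> 0" using Dk by linarith
        then show ?thesis using th by (simp add: field_simps)
      qed
      ultimately have "2 \<le> (4 * D ^ k / \<theta>) * \<alpha>" by linarith
      then have "1 \<le> C * \<alpha>" unfolding C_def using a0 by (simp add: distrib_right)
      moreover have "\<bar>integral\<^sup>L (norm_phi_I \<mu> I) \<psi> - integral\<^sup>L (norm_phi_I \<nu> I) \<psi>\<bar>
          = \<bar>integral\<^sup>L (norm_phi_I \<nu> I) \<psi>\<bar>" using Smu by simp
      ultimately show ?thesis using abs1[OF rn] by linarith
    next
      case False
      then have AI: "RI \<mu> I phi > 0" using Ipos[of \<mu>] by linarith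
      then have AJ: "RI \<mu> J phi > 0" using sphi_le[OF rm] spos
        by (meson mult_pos_pos order.strict_trans2)
      have Smu: "integral\<^sup>L (norm_phi_I \<mu> I) \<psi> = RI \<mu> I \<psi> / RI \<mu> I phi" using SI[OF rm psi] AI by simp
      define X where "X = s * RI \<mu> I \<psi> / RI \<mu> J phi"
      define p where "p = s * RI \<mu> I phi / RI \<mu> J phi"
      define Y where "Y = s * RI \<nu> I \<psi> / RI \<nu> J phi"
      have XS: "integral\<^sup>L (norm_phi_I \<mu> J) (resc I J \<psi>) = X" using SJ[OF rm pt] AJ RIr unfolding X_def by simp
      have pS: "integral\<^sup>L (norm_phi_I \<mu> J) (resc I J phi) = p" using SJ[OF rm ft] AJ RIr unfolding p_def by simp
      have YS: "integral\<^sup>L (norm_phi_I \<nu> J) (resc I J \<psi>) = Y" using SJ[OF rn pt] BJ RIr unfolding Y_def by simp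
      have key: "\<bar>X / p - Y / q\<bar> \<le> 2 * \<alpha> / q"
      proof (rule arith1)
        show "p > 0" unfolding p_def using spos AI AJ by simp
        show "q > 0" by (rule qpos)
        show "\<bar>X\<bar> \<le> p" unfolding X_def p_def using RI_abs_le[OF rm rI ne psi] spos AJ
          by (simp add: abs_mult abs_div_pos divide_right_mono mult_left_mono)
        show "\<bar>X - Y\<bar> \<le> \<alpha>" using aG[OF pt] XS YS by simp
        show "\<bar>p - q\<bar> \<le> \<alpha>" using aG[OF ft] pS qS by simp
      qed
      have e1: "X / p = RI \<mu> I \<psi> / RI \<mu> I phi" unfolding X_def p_def using spos AJ AI by simp
      have e2: "Y / q = RI \<nu> I \<psi> / RI \<nu> I phi" unfolding Y_def q_def using spos BJ BI by simp
      have "2 * \<alpha> / q \<le> 2 * \<alpha> / (\<theta> / (2 * D ^ k))"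
      proof (rule divide_left_mono[OF qlow])
        have tpos: "\<theta> / (2 * D ^ k) > 0" using th Dk by simp
        show "0 \<le> 2 * \<alpha>" using a0 by simp
        show "0 < q * (\<theta> / (2 * D ^ k))" using qpos tpos by (rule mult_pos_pos)
      qed
      also have "\<dots> = (4 * D ^ k / \<theta>) * \<alpha>" using th Dk by (simp add: field_simps)
      also have "\<dots> \<le> C * \<alpha>" unfolding C_def using a0 by (simp add: distrib_right)
      finally show ?thesis using key e1 e2 Smu Snu by simp
    qed
  qed
  then show ?thesis unfolding C_def \<alpha>_def .
qed



lemma part3:
  assumes "\<theta> > (0::real)"
  shows "\<exists>C. \<forall>\<mu>' \<nu>' I' J. radon \<mu>' \<longrightarrow> radon \<nu>' \<longrightarrow> doubling D \<nu>' \<longrightarrow>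
           real_interval I' \<longrightarrow> real_interval J \<longrightarrow> I' \<subseteq> J \<longrightarrow> ilen I' \<ge> \<theta> * ilen J \<longrightarrow>
           alpha_s \<mu>' \<nu>' I' \<le> C * alpha_s \<mu>' \<nu>' J"
proof -
  define D' where "D' = max D 1"
  obtain k :: nat where k: "4 / \<theta> < 2 ^ k" using real_arch_pow[of 2 "4 / \<theta>"] by auto
  have D1: "1 \<le> D'" unfolding D'_def by simp
  show ?thesis
  proof (intro exI allI impI)
    fix \<mu>' \<nu>' I' J
    assume rm: "radon \<mu>'" and rn: "radon \<nu>'" and dbl: "doubling D \<nu>'" and rI: "real_interval I'"
      and rJ: "real_interval J" and sub: "I' \<subseteq> J" and len: "ilen I' \<ge> \<theta> * ilen J"
    have dbl': "doubling D' \<nu>'" using doubling_mono[OF dbl] unfolding D'_def by simp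
    have a0: "0 \<le> alpha_s \<mu>' \<nu>' J" by (rule alpha_s_nonneg[OF rm rn rJ])
    have C0: "0 \<le> 4 * D' ^ k / \<theta> + 1" using D1 assms by simp
    show "alpha_s \<mu>' \<nu>' I' \<le> (4 * D' ^ k / \<theta> + 1) * alpha_s \<mu>' \<nu>' J"
    proof (cases "I' = {}")
      case True
      have "alpha_s \<mu>' \<nu>' I' \<le> 0" unfolding alpha_s_def
        by (rule W1_le) (simp add: True norm_phi_empty[OF rm TS_good] norm_phi_empty[OF rn TS_good])
      then show ?thesis using a0 C0 by (meson mult_nonneg_nonneg order_trans)
    next
      case False
      show ?thesis unfolding alpha_s_def[of _ _ I']
        by (rule W1_le) (rule part3_psi[OF rm rn dbl' D1 assms k rI rJ sub len False])
    qed
  qed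
qed

theorem mainTheorem9:
  fixes \<mu> \<nu> :: "real measure" and I :: "real set"
  assumes "radon \<mu>" and "radon \<nu>" and "real_interval I"
  shows "alpha_s \<mu> \<nu> I \<le> 2
    \<and> (emeasure \<nu> I > 0 \<longrightarrow> integral\<^sup>L (norm_I \<nu> I) phi > 0 \<longrightarrow>
           alpha_s \<mu> \<nu> I \<le> 2 * alpha \<mu> \<nu> I / integral\<^sup>L (norm_I \<nu> I) phi)
    \<and> (\<forall>D \<theta>. \<theta> > 0 \<longrightarrow> (\<exists>C. \<forall>\<mu>' \<nu>' I' J. radon \<mu>' \<longrightarrow> radon \<nu>' \<longrightarrow> doubling D \<nu>' \<longrightarrow>
           real_interval I' \<longrightarrow> real_interval J \<longrightarrow> I' \<subseteq> J \<longrightarrow> ilen I' \<ge> \<theta> * ilen J \<longrightarrow>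
           alpha_s \<mu>' \<nu>' I' \<le> C * alpha_s \<mu>' \<nu>' J))"
  using alpha_s_le2[OF assms] part2[OF assms] part3 by blast

end
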